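(* For $n\ge2$ and variables $x_1,\dots,x_{n-1}$, $y_1,\dots,y_{n-1}$, $z_1,\dots,z_n$, define $$\hat P_n=\sum_{\sigma\in S_n}(-1)^{\ell(\sigma)}\prod_{m=1}^{n-1}\Big(\prod_{k=1}^{m}(1+y_mz_{\sigma(k)})\prod_{k=m+1}^{n}(1-x_mz_{\sigma(k)})\Big),$$ where $\ell(\sigma)$ is the length (number of inversions) of $\sigma$. Then $$\hat P_n=\prod_{i=1}^{n-1}(x_i+y_i)\prod_{1\le i<j\le n-1}(x_i+y_j)\prod_{1\le i<j\le n}(z_i-z_j).$$ *)

theory Defs
  imports "HOL-Combinatorics.Permutations"
begin

definition perm_length :: "nat \<Rightarrow> (nat \<Rightarrow> nat) \<Rightarrow> nat" where
  "perm_length n \<sigma> = card {(i, j). 1 \<le> i \<and> i < j \<and> j \<le> n \<and> \<sigma> j < \<sigma> i}"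

definition P_hat :: "nat \<Rightarrow> (nat \<Rightarrow> 'a::comm_ring_1) \<Rightarrow> (nat \<Rightarrow> 'a) \<Rightarrow> (nat \<Rightarrow> 'a) \<Rightarrow> 'a" where
  "P_hat n x y z = (\<Sum>\<sigma> | \<sigma> permutes {1..n}.
      (-1) ^ perm_length n \<sigma> *
      (\<Prod>m=1..n-1. (\<Prod>k=1..m. 1 + y m * z (\<sigma> k)) * (\<Prod>k=m+1..n. 1 - x m * z (\<sigma> k))))"

end

theory Submission
  imports Defs
begin


definition alt :: "nat \<Rightarrow> (nat \<Rightarrow> 'a::comm_ring_1 \<Rightarrow> 'a) \<Rightarrow> (nat \<Rightarrow> 'a) \<Rightarrow> 'a" where
  "alt n f z = (\<Sum>\<sigma> | \<sigma> permutes {1..n}. of_int (sign \<sigma>) * (\<Prod>k=1..n. f k (z (\<sigma> k))))"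

lemma alt_cong:
  assumes "\<And>k t. k \<in> {1..n} \<Longrightarrow> f k t = g k t"
  shows "alt n f z = alt n g z"
  unfolding alt_def using assms by (intro sum.cong refl arg_cong2[where f="(*)"] prod.cong) auto

lemma alt_lin:
  assumes k: "k \<in> {1..n}" and h: "\<And>t. f k t = a * g t + b * h t"
  shows "alt n f z = a * alt n (f(k:=g)) z + b * alt n (f(k:=h)) z"
proof -
  have *: "(\<Prod>i=1..n. F i (z (\<sigma> i))) = F k (z (\<sigma> k)) * (\<Prod>i\<in>{1..n}-{k}. F i (z (\<sigma> i)))"
    for F :: "nat \<Rightarrow> 'a \<Rightarrow> 'a" and \<sigma>
    using k by (simp add: prod.remove)
  have **: "(\<Prod>i\<in>{1..n}-{k}. (F(k:=G)) i (z (\<sigma> i))) = (\<Prod>i\<in>{1..n}-{k}. F i (z (\<sigma> i)))"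
    for F :: "nat \<Rightarrow> 'a \<Rightarrow> 'a" and G \<sigma>
    by (intro prod.cong) auto
  show ?thesis
    unfolding alt_def sum_distrib_left sum.distrib[symmetric]
    apply (intro sum.cong refl)
    apply (subst (1 2 3) *)
    apply (simp only: ** h fun_upd_same)
    apply (simp add: algebra_simps)
    done
qed

lemma alt_dup:
  assumes k: "k \<in> {1..n}" and l: "l \<in> {1..n}" and kl: "k \<noteq> l"
    and eq: "\<And>t. f k t = f l t"
  shows "alt n f z = (0::'a::comm_ring_1)"
proof -
  define \<tau> where "\<tau> = Transposition.transpose k l"
  define T where "T \<sigma> = of_int (sign \<sigma>) * (\<Prod>i=1..n. f i (z (\<sigma> i)))" for \<sigma>
  let ?S = "{\<sigma>. \<sigma> permutes {1..n}}"
  let ?S1 = "{\<sigma>. \<sigma> permutes {1..n} \<and> \<sigma> k < \<sigma> l}"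
  let ?S2 = "{\<sigma>. \<sigma> permutes {1..n} \<and> \<sigma> l < \<sigma> k}"
  have fin: "finite ?S" by (rule finite_permutations) auto
  have tperm: "\<tau> permutes {1..n}" unfolding \<tau>_def using k l by (rule permutes_swap_id)
  have split: "?S = ?S1 \<union> ?S2"
  proof safe
    fix \<sigma> assume p: "\<sigma> permutes {1..n}" "\<not> \<sigma> l < \<sigma> k"
    have "\<sigma> k \<noteq> \<sigma> l" using permutes_inj[OF p(1)] kl by (auto dest: injD)
    then show "\<sigma> k < \<sigma> l" using p(2) by simp
  qed
  have disj: "?S1 \<inter> ?S2 = {}" by auto
  have tt: "\<tau> (\<tau> i) = i" for i unfolding \<tau>_def by simp
  have ttc: "\<sigma> \<circ> \<tau> \<circ> \<tau> = \<sigma>" for \<sigma> by (simp add: fun_eq_iff tt)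
  have tk: "\<tau> k = l" and tl: "\<tau> l = k" unfolding \<tau>_def by simp_all
  have Tneg: "T (\<sigma> \<circ> \<tau>) = - T \<sigma>" if p: "\<sigma> permutes {1..n}" for \<sigma>
  proof -
    have s1: "sign (\<sigma> \<circ> \<tau>) = sign \<sigma> * sign \<tau>"
      by (rule sign_compose) (use p tperm in \<open>auto intro: permutes_imp_permutation\<close>)
    have s2: "sign \<tau> = -1" unfolding \<tau>_def using kl by (simp add: sign_swap_id)
    have s: "sign (\<sigma> \<circ> \<tau>) = - sign \<sigma>" by (metis s1 s2 mult_minus1_right)
    have "(\<Prod>i=1..n. f i (z ((\<sigma> \<circ> \<tau>) i))) = (\<Prod>i=1..n. f (\<tau> i) (z (\<sigma> (\<tau> i))))"
      by (intro prod.cong refl) (auto simp: \<tau>_def Transposition.transpose_def eq)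
    also have "\<dots> = (\<Prod>i=1..n. f i (z (\<sigma> i)))"
      using prod.permute[OF tperm, of "\<lambda>i. f i (z (\<sigma> i))"] by (simp add: o_def)
    finally show ?thesis unfolding T_def s by simp
  qed
  have "sum T ?S2 = sum (\<lambda>\<sigma>. T (\<sigma> \<circ> \<tau>)) ?S1"
  proof (rule sum.reindex_bij_witness[where i="\<lambda>\<sigma>. \<sigma> \<circ> \<tau>" and j="\<lambda>\<sigma>. \<sigma> \<circ> \<tau>"])
    fix \<sigma> assume a: "\<sigma> \<in> ?S2"
    show "\<sigma> \<circ> \<tau> \<circ> \<tau> = \<sigma>" by (simp add: fun_eq_iff tt)
    show "\<sigma> \<circ> \<tau> \<in> ?S1" using a permutes_compose[OF tperm, of \<sigma>] tk tl by auto
  next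
    fix \<sigma> assume a: "\<sigma> \<in> ?S1"
    show "\<sigma> \<circ> \<tau> \<circ> \<tau> = \<sigma>" by (simp add: fun_eq_iff tt)
    show "\<sigma> \<circ> \<tau> \<in> ?S2" using a permutes_compose[OF tperm, of \<sigma>] tk tl by auto
  qed (rule arg_cong[where f=T], rule ttc)
  also have "\<dots> = sum (\<lambda>\<sigma>. - T \<sigma>) ?S1" by (rule sum.cong) (auto intro: Tneg)
  also have "\<dots> = - sum T ?S1" by (rule sum_negf)
  finally have e2: "sum T ?S2 = - sum T ?S1" .
  have f1: "finite ?S1" by (rule finite_subset[OF _ fin]) auto
  have f2: "finite ?S2" by (rule finite_subset[OF _ fin]) auto
  have "sum T ?S = sum T ?S1 + sum T ?S2"
    unfolding split by (rule sum.union_disjoint[OF f1 f2 disj])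
  then have "sum T ?S = 0" using e2 by simp
  then show ?thesis unfolding alt_def T_def .
qed



lemma alt_stage_next:
  fixes A B :: "nat \<Rightarrow> 'a::comm_ring_1 \<Rightarrow> 'a"
  assumes rel: "\<And>k t. k \<in> {1..n} \<Longrightarrow> A k t = c k * B k t + e k * A (Suc k) t"
    and en: "e n = 0"
  shows "alt n A z = (\<Prod>k=1..n. c k) * alt n B z"
proof -
  have main: "m \<le> n \<Longrightarrow> alt n A z = (\<Prod>k=1..m. c k) * alt n (\<lambda>k. if k \<le> m then B k else A k) z" for m
  proof (induction m)
    case 0
    have "alt n (\<lambda>k. if k \<le> 0 then B k else A k) z = alt n A z" by (rule alt_cong) auto
    then show ?case by simp
  next
    case (Suc m)
    let ?F = "\<lambda>k. if k \<le> m then B k else A k"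
    let ?F' = "\<lambda>k. if k \<le> Suc m then B k else A k"
    have sm: "Suc m \<in> {1..n}" using Suc.prems by auto
    have "alt n ?F z = c (Suc m) * alt n (?F(Suc m := B (Suc m))) z
        + e (Suc m) * alt n (?F(Suc m := A (Suc (Suc m)))) z"
      by (rule alt_lin[OF sm]) (simp add: rel[OF sm])
    also have "?F(Suc m := B (Suc m)) = ?F'" by (auto simp: fun_eq_iff)
    also have "e (Suc m) * alt n (?F(Suc m := A (Suc (Suc m)))) z = 0"
    proof (cases "Suc m = n")
      case True then show ?thesis using en by simp
    next
      case False
      then have ss: "Suc (Suc m) \<in> {1..n}" using Suc.prems by auto
      have "alt n (?F(Suc m := A (Suc (Suc m)))) z = 0"
        by (rule alt_dup[OF sm ss]) auto
      then show ?thesis by simp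
    qed
    finally have st: "alt n ?F z = c (Suc m) * alt n ?F' z" by simp
    have ih: "alt n A z = (\<Prod>k=1..m. c k) * alt n ?F z" using Suc by simp
    have pr: "(\<Prod>k=1..Suc m. c k) = (\<Prod>k=1..m. c k) * c (Suc m)" by simp
    show ?case unfolding ih st pr by (simp only: mult.assoc)
  qed
  have "alt n (\<lambda>k. if k \<le> n then B k else A k) z = alt n B z"
    by (rule alt_cong) auto
  with main[of n] show ?thesis by simp
qed

lemma alt_stage_prev:
  fixes A B :: "nat \<Rightarrow> 'a::comm_ring_1 \<Rightarrow> 'a"
  assumes rel: "\<And>k t. k \<in> {1..n} \<Longrightarrow> A k t = c k * B k t + e k * B (k - 1) t"
    and e1: "e 1 = 0"
  shows "alt n A z = (\<Prod>k=1..n. c k) * alt n B z"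
proof -
  have main: "m \<le> n \<Longrightarrow> alt n A z = (\<Prod>k=1..m. c k) * alt n (\<lambda>k. if k \<le> m then B k else A k) z" for m
  proof (induction m)
    case 0
    have "alt n (\<lambda>k. if k \<le> 0 then B k else A k) z = alt n A z" by (rule alt_cong) auto
    then show ?case by simp
  next
    case (Suc m)
    let ?F = "\<lambda>k. if k \<le> m then B k else A k"
    let ?F' = "\<lambda>k. if k \<le> Suc m then B k else A k"
    have sm: "Suc m \<in> {1..n}" using Suc.prems by auto
    have "alt n ?F z = c (Suc m) * alt n (?F(Suc m := B (Suc m))) z
        + e (Suc m) * alt n (?F(Suc m := B m)) z"
      by (rule alt_lin[OF sm]) (simp add: rel[OF sm])
    also have "?F(Suc m := B (Suc m)) = ?F'" by (auto simp: fun_eq_iff)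
    also have "e (Suc m) * alt n (?F(Suc m := B m)) z = 0"
    proof (cases "m = 0")
      case True then show ?thesis using e1 by simp
    next
      case False
      then have ss: "m \<in> {1..n}" using Suc.prems by auto
      have "alt n (?F(Suc m := B m)) z = 0"
        by (rule alt_dup[OF sm ss]) auto
      then show ?thesis by simp
    qed
    finally have st: "alt n ?F z = c (Suc m) * alt n ?F' z" by simp
    have ih: "alt n A z = (\<Prod>k=1..m. c k) * alt n ?F z" using Suc by simp
    have pr: "(\<Prod>k=1..Suc m. c k) = (\<Prod>k=1..m. c k) * c (Suc m)" by simp
    show ?case unfolding ih st pr by (simp only: mult.assoc)
  qed
  have "alt n (\<lambda>k. if k \<le> n then B k else A k) z = alt n B z"
    by (rule alt_cong) auto
  with main[of n] show ?thesis by simp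
qed

lemma perm_le_id:
  fixes \<sigma> :: "nat \<Rightarrow> nat"
  assumes p: "\<sigma> permutes {1..n}" and le: "\<And>k. k \<in> {1..n} \<Longrightarrow> \<sigma> k \<le> k"
  shows "\<sigma> = id"
proof -
  have eqs: "\<sigma> k = k" if k: "k \<in> {1..n}" for k
  proof (rule ccontr)
    assume "\<sigma> k \<noteq> k"
    then have "\<sigma> k < k" using le[OF k] by linarith
    then have "sum \<sigma> {1..n} < sum id {1..n}"
      using le k by (intro sum_strict_mono_ex1) auto
    moreover have "sum \<sigma> {1..n} = sum id {1..n}"
      using sum.permute[OF p, of id] by (simp add: o_def)
    ultimately show False by simp
  qed
  show ?thesis
  proof
    fix k show "\<sigma> k = id k"
      using eqs permutes_not_in[OF p] by (cases "k \<in> {1..n}") auto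
  qed
qed

lemma alt_upper_tri:
  fixes f :: "nat \<Rightarrow> 'a::comm_ring_1 \<Rightarrow> 'a" and n :: nat
  assumes zero: "\<And>k j. 1 \<le> k \<Longrightarrow> k < j \<Longrightarrow> j \<le> n \<Longrightarrow> f k (z j) = 0"
  shows "alt n f z = (\<Prod>k=1..n. f k (z k))"
proof -
  let ?S = "{\<sigma>. \<sigma> permutes {1..n}}"
  let ?T = "\<lambda>\<sigma>. of_int (sign \<sigma>) * (\<Prod>k=1..n. f k (z (\<sigma> k)))"
  have fin: "finite ?S" by (rule finite_permutations) auto
  have idS: "id \<in> ?S" by (simp add: permutes_id)
  have "sum ?T ?S = ?T id + sum ?T (?S - {id})" by (rule sum.remove[OF fin idS])
  also have "sum ?T (?S - {id}) = 0"
  proof (rule sum.neutral, rule ballI)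
    fix \<sigma> assume "\<sigma> \<in> ?S - {id}"
    then have p: "\<sigma> permutes {1..n}" and ne: "\<sigma> \<noteq> id" by auto
    obtain k where k: "k \<in> {1..n}" "\<sigma> k > k"
      using perm_le_id[OF p] ne by (meson not_le)
    have "\<sigma> k \<in> {1..n}" using k(1) permutes_in_image[OF p] by simp
    then have "f k (z (\<sigma> k)) = 0" using k by (intro zero) auto
    then have "(\<Prod>k=1..n. f k (z (\<sigma> k))) = 0"
      using k(1) by (intro prod_zero) auto
    then show "?T \<sigma> = 0" by simp
  qed
  finally have "sum ?T ?S = ?T id" by (simp only: add_0_right)
  also have "?T id = (\<Prod>k=1..n. f k (z k))" by simp
  finally show ?thesis unfolding alt_def .
qed



lemma perm_length_adj:
  fixes p :: "nat \<Rightarrow> nat"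
  assumes p: "p permutes {1..n}" and a: "1 \<le> a" "Suc a \<le> n"
  shows "(-1::int) ^ perm_length n (Transposition.transpose a (Suc a) \<circ> p) = - ((-1) ^ perm_length n p)"
proof -
  let ?\<tau> = "Transposition.transpose a (Suc a)"
  define q where "q = ?\<tau> \<circ> p"
  define I where "I f = {(i, j). 1 \<le> i \<and> i < j \<and> j \<le> n \<and> f j < f (i::nat)}" for f :: "nat \<Rightarrow> nat"
  have img: "p ` {1..n} = {1..n}" using permutes_image[OF p] .
  have "a \<in> p ` {1..n}" using a img by auto
  then obtain u where u: "u \<in> {1..n}" "p u = a" by (auto simp del: atLeastAtMost_iff)
  have "Suc a \<in> p ` {1..n}" using a img by auto
  then obtain v where v: "v \<in> {1..n}" "p v = Suc a" by (auto simp del: atLeastAtMost_iff)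
  have inj: "inj p" using permutes_inj[OF p] .
  have uv: "u \<noteq> v" using u v by auto
  define e where "e = (min u v, max u v)"
  have key: "(q j < q i) = ((p j < p i) \<noteq> ((i, j) = e))" if ij: "i < j" for i j
  proof (cases "(i, j) = e")
    case True
    then have "(i = u \<and> j = v) \<or> (i = v \<and> j = u)" using uv by (auto simp: e_def min_def max_def split: if_splits)
    moreover have t1: "?\<tau> a = Suc a" "?\<tau> (Suc a) = a" by (simp_all add: Transposition.transpose_def)
    ultimately have "(q j < q i) = (\<not> p j < p i)" using u(2) v(2) by (auto simp: q_def)
    then show ?thesis unfolding True by simp
  next
    case False
    have nb: "\<not> (p i \<in> {a, Suc a} \<and> p j \<in> {a, Suc a})"
    proof
      assume h: "p i \<in> {a, Suc a} \<and> p j \<in> {a, Suc a}"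
      have pe: "p x = p y \<longleftrightarrow> x = y" for x y using inj by (simp add: inj_eq)
      have "i \<in> {u, v}" using h u(2) v(2) pe by (metis insert_iff singletonD)
      moreover have "j \<in> {u, v}" using h u(2) v(2) pe by (metis insert_iff singletonD)
      ultimately have "(i, j) = e" using ij uv unfolding e_def by (auto simp: min_def max_def)
      then show False using False by simp
    qed
    have "(q j < q i) = (?\<tau> (p j) < ?\<tau> (p i))" by (simp add: q_def)
    also have "\<dots> = (p j < p i)"
      using nb unfolding Transposition.transpose_def by (auto split: if_splits)
    finally have "(q j < q i) = (p j < p i)" .
    then show ?thesis using False by simp
  qed
  have eI: "1 \<le> fst e \<and> fst e < snd e \<and> snd e \<le> n" using u v uv by (auto simp: e_def min_def max_def)
  have fin: "finite (I p)"
    by (rule finite_subset[of _ "{1..n} \<times> {1..n}"]) (auto simp: I_def)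
  have Iq: "I q = (if e \<in> I p then I p - {e} else insert e (I p))"
    using eI key by (auto simp: I_def split: if_splits)
  have pl: "perm_length n f = card (I f)" for f unfolding perm_length_def I_def by simp
  show ?thesis
  proof (cases "e \<in> I p")
    case True
    then have "card (I q) = card (I p) - 1" "card (I p) \<ge> 1"
      using Iq fin by (auto simp: card_gt_0_iff Suc_le_eq)
    then obtain c where "card (I p) = Suc c" "card (I q) = c"
      by (metis Suc_diff_1 less_eq_Suc_le One_nat_def)
    then show ?thesis unfolding pl q_def[symmetric] by simp
  next
    case False
    then have "card (I q) = Suc (card (I p))" using Iq fin by simp
    then show ?thesis unfolding pl q_def[symmetric] by simp
  qed
qed

lemma sign_perm_length:
  fixes p :: "nat \<Rightarrow> nat"
  assumes p: "p permutes {1..n}"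
  shows "(-1::int) ^ perm_length n p = sign p"
proof -
  let ?P = "\<lambda>p. (-1::int) ^ perm_length n p = sign p"
  have adj: "?P (apply_adj_transps xs \<circ> q)"
    if "q permutes {1..n}" "?P q" "\<forall>x\<in>set xs. 1 \<le> x \<and> Suc x \<le> n" for xs q
    using that
  proof (induction xs)
    case Nil then show ?case by simp
  next
    case (Cons x xs)
    let ?r = "apply_adj_transps xs \<circ> q"
    have r: "?r permutes {1..n}"
      using Cons.prems by (intro permutes_compose permutes_apply_adj_transps) auto
    have Pr: "?P ?r" by (rule Cons.IH) (use Cons.prems in auto)
    have eq: "apply_adj_transps (x # xs) \<circ> q = Transposition.transpose x (Suc x) \<circ> ?r"
      by (simp add: o_assoc)
    have s1: "sign (Transposition.transpose x (Suc x) \<circ> ?r) = sign (Transposition.transpose x (Suc x)) * sign ?r"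
      by (rule sign_compose) (use r in \<open>auto intro: permutes_imp_permutation permutation_swap_id\<close>)
    have s: "sign (Transposition.transpose x (Suc x) \<circ> ?r) = - sign ?r"
      unfolding s1 by (simp add: sign_swap_id)
    have l: "(-1::int) ^ perm_length n (Transposition.transpose x (Suc x) \<circ> ?r) = - ((-1) ^ perm_length n ?r)"
      by (rule perm_length_adj[OF r]) (use Cons.prems in auto)
    show ?case by (simp only: eq l Pr s)
  qed
  have fS: "finite {1..n}" by simp
  show ?thesis
    using p fS
  proof (induction rule: permutes_induct)
    case id
    have "{(i, j). 1 \<le> i \<and> i < j \<and> j \<le> n \<and> id j < id (i::nat)} = {}" (is "?E = _") by auto
    then have "perm_length n id = 0" unfolding perm_length_def by (simp only: card.empty)
    then show ?case by (simp add: id_def)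
  next
    case (swap a b q)
    define lo where "lo = min a b"
    define hi where "hi = max a b"
    have "Transposition.transpose a b = Transposition.transpose lo hi"
      unfolding lo_def hi_def by (cases "a \<le> b") (auto simp: transpose_commute min_def max_def)
    also have "\<dots> = apply_adj_transps (adj_transp_seq lo hi)"
      using swap.hyps by (intro adj_transp_seq_correct[symmetric]) (auto simp: lo_def hi_def)
    finally have t: "Transposition.transpose a b = apply_adj_transps (adj_transp_seq lo hi)" .
    have "\<forall>x\<in>set (adj_transp_seq lo hi). 1 \<le> x \<and> Suc x \<le> n"
      using swap.hyps by (subst set_adj_transp_seq) (auto simp: lo_def hi_def)
    then show ?case unfolding t using adj swap by blast
  qed
qed



definition RR :: "nat \<Rightarrow> (nat \<Rightarrow> 'a::comm_ring_1) \<Rightarrow> (nat \<Rightarrow> 'a) \<Rightarrow> nat \<Rightarrow> nat \<Rightarrow> 'a \<Rightarrow> 'a" where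
  "RR n x y d k t = t ^ min d (n-k) * (\<Prod>m=1..k-1. 1 - x m * t) * (\<Prod>m=k + min d (n-k)..n-1. 1 + y m * t)"

definition EE :: "nat \<Rightarrow> (nat \<Rightarrow> 'a::comm_ring_1) \<Rightarrow> nat \<Rightarrow> nat \<Rightarrow> 'a \<Rightarrow> 'a" where
  "EE n x d k t = t ^ (n-k) * (\<Prod>m=1..min k (n-d) - 1. 1 - x m * t)"

definition HH :: "nat \<Rightarrow> (nat \<Rightarrow> 'a::comm_ring_1) \<Rightarrow> nat \<Rightarrow> nat \<Rightarrow> 'a \<Rightarrow> 'a" where
  "HH n z d k t = t ^ (n - k - min d (n-k)) * (\<Prod>m = n - min d (n-k) + 1..n. t - z m)"

lemma prod_top: fixes k :: nat shows "1 \<le> k \<Longrightarrow> (\<Prod>m=1..k. f m) = (\<Prod>m=1..k-1. f m) * (f k :: 'a::comm_monoid_mult)"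
  by (cases k) (auto simp: prod.cl_ivl_Suc)

lemma RR_rel:
  fixes x y :: "nat \<Rightarrow> 'a::comm_ring_1"
  assumes d: "d < n - 1" and k: "k \<in> {1..n}"
  shows "RR n x y d k t = (if k + d \<le> n - 1 then x k + y (k + d) else 1) * RR n x y (Suc d) k t
       + (if k + d \<le> n - 1 then 1 else 0) * RR n x y d (Suc k) t"
proof (cases "k + d \<le> n - 1")
  case True
  have m1: "min d (n-k) = d" "min (Suc d) (n-k) = Suc d" "min d (n - Suc k) = d" using True k by auto
  have pk: "(\<Prod>m=1..Suc k - 1. 1 - x m * t) = (\<Prod>m=1..k-1. 1 - x m * t) * (1 - x k * t)"
    using k prod_top[of k "\<lambda>m. 1 - x m * t"] by simp
  have qk: "(\<Prod>m=k+d..n-1. 1 + y m * t) = (1 + y (k+d) * t) * (\<Prod>m=Suc (k+d)..n-1. 1 + y m * t)"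
    using True by (simp add: prod.atLeast_Suc_atMost)
  show ?thesis
    unfolding RR_def m1 using True
    apply (simp only: pk qk if_True add_Suc_right add_Suc)
    apply (simp add: algebra_simps)
    done
next
  case False
  have m1: "min d (n-k) = n - k" "min (Suc d) (n-k) = n - k" using False k by auto
  show ?thesis unfolding RR_def m1 using False by simp
qed

lemma EE_rel:
  fixes x :: "nat \<Rightarrow> 'a::comm_ring_1"
  assumes d: "d < n - 1" and k: "k \<in> {1..n}"
  shows "EE n x d k t = 1 * EE n x (Suc d) k t
       + (if n - d \<le> k then - x (n - d - 1) else 0) * EE n x (Suc d) (k - 1) t"
proof (cases "n - d \<le> k")
  case True
  define j where "j = n - d - 1"
  have m1: "min k (n-d) - 1 = j" "min k (n - Suc d) - 1 = j - 1" "min (k-1) (n - Suc d) - 1 = j - 1"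
    using True k d by (auto simp: j_def)
  have jj: "j \<ge> 1" using d by (auto simp: j_def)
  have pk: "(\<Prod>m=1..j. 1 - x m * t) = (\<Prod>m=1..j-1. 1 - x m * t) * (1 - x j * t)"
    using prod_top[OF jj, of "\<lambda>m. 1 - x m * t"] .
  have ex: "n - (k - 1) = Suc (n - k)" using k by auto
  show ?thesis
    unfolding EE_def m1 ex j_def[symmetric] pk using True
    by (simp add: algebra_simps)
next
  case False
  have m1: "min k (n-d) = k" "min k (n - Suc d) = k" using False k by auto
  show ?thesis unfolding EE_def m1 using False by simp
qed

lemma HH_rel:
  fixes z :: "nat \<Rightarrow> 'a::comm_ring_1"
  assumes d: "d < n" and k: "k \<in> {1..n}"
  shows "HH n z d k t = 1 * HH n z (Suc d) k t
       + (if k + d + 1 \<le> n then z (n - d) else 0) * HH n z d (Suc k) t"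
proof (cases "k + d + 1 \<le> n")
  case True
  have m1: "min d (n-k) = d" "min (Suc d) (n-k) = Suc d" "min d (n - Suc k) = d" using True k by auto
  have e1: "n - Suc d + 1 = n - d" "n - d + 1 = Suc (n - d)" using True by auto
  have e2: "n - k - d = Suc (n - Suc k - d)" "n - k - Suc d = n - Suc k - d" using True by auto
  have qk: "(\<Prod>m=n-d..n. t - z m) = (t - z (n-d)) * (\<Prod>m=Suc (n-d)..n. t - z m)"
    by (simp add: prod.atLeast_Suc_atMost)
  show ?thesis
    unfolding HH_def m1 e1 e2 qk using True
    by (simp add: algebra_simps)
next
  case False
  have m1: "min d (n-k) = n - k" "min (Suc d) (n-k) = n - k" using False k by auto
  show ?thesis unfolding HH_def m1 using False by simp
qed



lemma iterR:
  fixes x y z :: "nat \<Rightarrow> 'a::comm_ring_1"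
  assumes n: "n \<ge> 1"
  shows "d \<le> n - 1 \<Longrightarrow> alt n (RR n x y 0) z =
    (\<Prod>d'<d. \<Prod>k=1..n. (if k + d' \<le> n - 1 then x k + y (k + d') else 1)) * alt n (RR n x y d) z"
proof (induction d)
  case 0 then show ?case by simp
next
  case (Suc d)
  have dl: "d < n - 1" using Suc.prems by simp
  have st: "alt n (RR n x y d) z = (\<Prod>k=1..n. (if k + d \<le> n - 1 then x k + y (k + d) else 1)) * alt n (RR n x y (Suc d)) z"
    apply (rule alt_stage_next[where e="\<lambda>k. if k + d \<le> n - 1 then 1 else 0"
          and c="\<lambda>k. if k + d \<le> n - 1 then x k + y (k + d) else 1"])
     apply (rule RR_rel[OF dl], assumption)
    using n apply simp
    done
  show ?case using Suc.IH Suc.prems st by (simp add: mult.assoc)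
qed

lemma iterE:
  fixes x z :: "nat \<Rightarrow> 'a::comm_ring_1"
  shows "d \<le> n - 1 \<Longrightarrow> alt n (EE n x 0) z = alt n (EE n x d) z"
proof (induction d)
  case 0 then show ?case by simp
next
  case (Suc d)
  have dl: "d < n - 1" using Suc.prems by simp
  have nd: "\<not> (n - d \<le> 1)" using dl by linarith
  have st: "alt n (EE n x d) z = (\<Prod>k=1..n. 1) * alt n (EE n x (Suc d)) z"
    apply (rule alt_stage_prev[where e="\<lambda>k. if n - d \<le> k then - x (n - d - 1) else 0"
          and c="\<lambda>k. 1"])
     apply (rule EE_rel[OF dl], assumption)
    using nd apply simp
    done
  show ?case using Suc.IH Suc.prems st by simp
qed

lemma iterH:
  fixes z :: "nat \<Rightarrow> 'a::comm_ring_1"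
  shows "d \<le> n \<Longrightarrow> alt n (HH n z 0) z = alt n (HH n z d) z"
proof (induction d)
  case 0 then show ?case by simp
next
  case (Suc d)
  have dl: "d < n" using Suc.prems by simp
  have st: "alt n (HH n z d) z = (\<Prod>k=1..n. 1) * alt n (HH n z (Suc d)) z"
    apply (rule alt_stage_next[where e="\<lambda>k. if k + d + 1 \<le> n then z (n - d) else 0"
          and c="\<lambda>k. 1"])
     apply (rule HH_rel[OF dl], assumption)
    using dl apply simp
    done
  show ?case using Suc.IH Suc.prems st by simp
qed

lemma vander:
  fixes z :: "nat \<Rightarrow> 'a::comm_ring_1"
  shows "alt n (HH n z n) z = (\<Prod>k=1..n. \<Prod>m=k+1..n. z k - z m)"
proof -
  have h: "HH n z n k t = (\<Prod>m=k+1..n. t - z m)" if "k \<le> n" for k t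
  proof -
    have "min n (n - k) = n - k" "n - (n - k) + 1 = k + 1" using that by auto
    then show ?thesis unfolding HH_def by simp
  qed
  have "alt n (HH n z n) z = (\<Prod>k=1..n. HH n z n k (z k))"
  proof (rule alt_upper_tri)
    fix k j assume kj: "1 \<le> k" "k < j" "j \<le> n"
    show "HH n z n k (z j) = 0" unfolding h[OF order.trans[OF less_imp_le[OF kj(2)] kj(3)]]
      by (rule prod_zero) (use kj in auto)
  qed
  also have "\<dots> = (\<Prod>k=1..n. \<Prod>m=k+1..n. z k - z m)"
    by (rule prod.cong) (auto simp: h)
  finally show ?thesis .
qed



lemma link_RE:
  fixes x y :: "nat \<Rightarrow> 'a::comm_ring_1"
  assumes "k \<in> {1..n}"
  shows "RR n x y (n-1) k t = EE n x 0 k t"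
proof -
  have "min (n-1) (n-k) = n - k" "k + (n - k) = n" "min k n = k" "{n..n-1} = {}" using assms by auto
  then show ?thesis unfolding RR_def EE_def by simp
qed

lemma link_EH:
  fixes x z :: "nat \<Rightarrow> 'a::comm_ring_1"
  assumes "k \<in> {1..n}"
  shows "EE n x (n-1) k t = HH n z 0 k t"
proof -
  have "min k (n - (n - 1)) - 1 = 0" using assms by auto
  then show ?thesis unfolding EE_def HH_def by simp
qed

lemma tri_prod_swap:
  fixes A B :: "nat \<Rightarrow> nat \<Rightarrow> 'a::comm_monoid_mult"
  assumes N: "Suc N = n"
  shows "(\<Prod>m=1..N. (\<Prod>k=1..m. A m k) * (\<Prod>k=m+1..n. B m k))
       = (\<Prod>k=1..n. (\<Prod>m=1..k-1. B m k) * (\<Prod>m=k..N. A m k))"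
proof -
  have l: "(\<Prod>k=1..m. A m k) * (\<Prod>k=m+1..n. B m k) = (\<Prod>k\<in>{1..n}. if k \<le> m then A m k else B m k)"
    if "m \<in> {1..N}" for m
  proof -
    have s1: "{1..n} \<inter> {k. k \<le> m} = {1..m}" "{1..n} \<inter> - {k. k \<le> m} = {m+1..n}"
      using that N by auto
    show ?thesis by (simp only: prod.If_cases[OF finite_atLeastAtMost] s1)
  qed
  have r: "(\<Prod>m=1..k-1. B m k) * (\<Prod>m=k..N. A m k) = (\<Prod>m\<in>{1..N}. if k \<le> m then A m k else B m k)"
    if "k \<in> {1..n}" for k
  proof -
    have s1: "{1..N} \<inter> {m. k \<le> m} = {k..N}" "{1..N} \<inter> - {m. k \<le> m} = {1..k-1}"
      using that N by auto
    show ?thesis by (simp only: prod.If_cases[OF finite_atLeastAtMost] s1 mult.commute)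
  qed
  have "(\<Prod>m=1..N. (\<Prod>k=1..m. A m k) * (\<Prod>k=m+1..n. B m k))
      = (\<Prod>m=1..N. \<Prod>k\<in>{1..n}. if k \<le> m then A m k else B m k)"
    by (rule prod.cong[OF refl], rule l)
  also have "\<dots> = (\<Prod>k=1..n. \<Prod>m\<in>{1..N}. if k \<le> m then A m k else B m k)"
    by (rule prod.swap)
  also have "\<dots> = (\<Prod>k=1..n. (\<Prod>m=1..k-1. B m k) * (\<Prod>m=k..N. A m k))"
    by (rule prod.cong[OF refl], rule r[symmetric])
  finally show ?thesis .
qed

lemma Phat_alt:
  fixes x y z :: "nat \<Rightarrow> 'a::comm_ring_1"
  assumes n: "n \<ge> 1"
  shows "P_hat n x y z = alt n (RR n x y 0) z"
  unfolding P_hat_def alt_def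
proof (rule sum.cong[OF refl])
  fix \<sigma> assume "\<sigma> \<in> {\<sigma>. \<sigma> permutes {1..n}}"
  then have p: "\<sigma> permutes {1..n}" by simp
  have s: "(-1::'a) ^ perm_length n \<sigma> = of_int (sign \<sigma>)"
    using arg_cong[OF sign_perm_length[OF p], of "of_int :: int \<Rightarrow> 'a"] by simp
  have pr: "(\<Prod>m=1..n-1. (\<Prod>k=1..m. 1 + y m * z (\<sigma> k)) * (\<Prod>k=m+1..n. 1 - x m * z (\<sigma> k)))
     = (\<Prod>k=1..n. (\<Prod>m=1..k-1. 1 - x m * z (\<sigma> k)) * (\<Prod>m=k..n-1. 1 + y m * z (\<sigma> k)))"
    by (rule tri_prod_swap) (use n in simp)
  have rr: "RR n x y 0 k t = (\<Prod>m=1..k-1. 1 - x m * t) * (\<Prod>m=k..n-1. 1 + y m * t)" for k t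
    unfolding RR_def by simp
  show "(-1) ^ perm_length n \<sigma> *
      (\<Prod>m=1..n-1. (\<Prod>k=1..m. 1 + y m * z (\<sigma> k)) * (\<Prod>k=m+1..n. 1 - x m * z (\<sigma> k))) =
      of_int (sign \<sigma>) * (\<Prod>k=1..n. RR n x y 0 k (z (\<sigma> k)))"
    unfolding s pr rr ..
qed

lemma xy_prod:
  fixes x y :: "nat \<Rightarrow> 'a::comm_ring_1"
  assumes n: "n \<ge> 1"
  shows "(\<Prod>d'<n-1. \<Prod>k=1..n. (if k + d' \<le> n - 1 then x k + y (k + d') else 1)) =
    (\<Prod>i=1..n-1. x i + y i) *
    (\<Prod>(i, j) \<in> {(i, j). 1 \<le> i \<and> i < j \<and> j \<le> n - 1}. x i + y j)"
proof -
  have inner: "(\<Prod>d'<n-1. (if k + d' \<le> n - 1 then x k + y (k + d') else 1)) = (\<Prod>j=k..n-1. x k + y j)"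
    if k: "k \<in> {1..n}" for k
  proof -
    have "(\<Prod>d'<n-1. (if k + d' \<le> n - 1 then x k + y (k + d') else 1))
        = (\<Prod>d'\<in>{d'\<in>{..<n-1}. k + d' \<le> n - 1}. x k + y (k + d'))"
      by (rule prod.inter_filter[symmetric]) simp
    also have "\<dots> = (\<Prod>j=k..n-1. x k + y j)"
      by (rule prod.reindex_bij_witness[where i="\<lambda>j. j - k" and j="\<lambda>d. k + d"]) (use k in auto)
    finally show ?thesis .
  qed
  have "(\<Prod>d'<n-1. \<Prod>k=1..n. (if k + d' \<le> n - 1 then x k + y (k + d') else 1))
      = (\<Prod>k=1..n. \<Prod>d'<n-1. (if k + d' \<le> n - 1 then x k + y (k + d') else 1))"
    by (rule prod.swap)
  also have "\<dots> = (\<Prod>k=1..n. \<Prod>j=k..n-1. x k + y j)"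
    by (rule prod.cong[OF refl], rule inner)
  also have "\<dots> = (\<Prod>k=1..n-1. \<Prod>j=k..n-1. x k + y j)"
    using prod_top[OF n, of "\<lambda>k. \<Prod>j=k..n-1. x k + y j"] n by simp
  also have "\<dots> = (\<Prod>k=1..n-1. (x k + y k) * (\<Prod>j=k+1..n-1. x k + y j))"
    by (rule prod.cong) (auto simp: prod.atLeast_Suc_atMost)
  also have "\<dots> = (\<Prod>k=1..n-1. x k + y k) * (\<Prod>k=1..n-1. \<Prod>j=k+1..n-1. x k + y j)"
    by (rule prod.distrib)
  also have "(\<Prod>k=1..n-1. \<Prod>j=k+1..n-1. x k + y j)
      = (\<Prod>(i, j) \<in> (SIGMA i:{1..n-1}. {i+1..n-1}). x i + y j)"
    by (rule prod.Sigma) auto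
  also have "(SIGMA i:{1..n-1}. {i+1..n-1}) = {(i, j). 1 \<le> i \<and> i < j \<and> j \<le> n - 1}"
    by auto
  finally show ?thesis .
qed

lemma vander_prod:
  fixes z :: "nat \<Rightarrow> 'a::comm_ring_1"
  shows "(\<Prod>k=1..n. \<Prod>m=k+1..n. z k - z m) = (\<Prod>(i, j) \<in> {(i, j). 1 \<le> i \<and> i < j \<and> j \<le> n}. z i - z j)"
proof -
  have "(\<Prod>k=1..n. \<Prod>m=k+1..n. z k - z m) = (\<Prod>(i, j) \<in> (SIGMA i:{1..n}. {i+1..n}). z i - z j)"
    by (rule prod.Sigma) auto
  also have "(SIGMA i:{1..n}. {i+1..n}) = {(i, j). 1 \<le> i \<and> i < j \<and> j \<le> n}"
    by auto
  finally show ?thesis .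
qed

theorem mainTheorem7:
  fixes n :: nat and x y z :: "nat \<Rightarrow> 'a::comm_ring_1"
  assumes "n \<ge> 2"
  shows "P_hat n x y z =
    (\<Prod>i=1..n-1. x i + y i) *
    (\<Prod>(i, j) \<in> {(i, j). 1 \<le> i \<and> i < j \<and> j \<le> n - 1}. x i + y j) *
    (\<Prod>(i, j) \<in> {(i, j). 1 \<le> i \<and> i < j \<and> j \<le> n}. z i - z j)"
proof -
  have n: "n \<ge> 1" using assms by simp
  have "P_hat n x y z = alt n (RR n x y 0) z" by (rule Phat_alt[OF n])
  also have "\<dots> = (\<Prod>d'<n-1. \<Prod>k=1..n. (if k + d' \<le> n - 1 then x k + y (k + d') else 1))
      * alt n (RR n x y (n-1)) z"
    by (rule iterR[OF n]) simp
  also have "alt n (RR n x y (n-1)) z = alt n (EE n x 0) z"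
    by (rule alt_cong) (rule link_RE)
  also have "\<dots> = alt n (EE n x (n-1)) z" by (rule iterE) simp
  also have "\<dots> = alt n (HH n z 0) z"
    by (rule alt_cong) (rule link_EH)
  also have "\<dots> = alt n (HH n z n) z" by (rule iterH) simp
  also have "\<dots> = (\<Prod>k=1..n. \<Prod>m=k+1..n. z k - z m)" by (rule vander)
  also note xy_prod[OF n]
  also note vander_prod
  finally show ?thesis .
qed


end
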